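(* Let $N\ge1$ be an integer, $d>0$, $T>0$, and $0\le s_1\le\dots\le s_N$. Let $x^*$ be the optimal solution of the (assumed feasible) problem $$\min_{x\in\mathbb{R}^{N+1}}\ \sum_{i=1}^{N+1}x_i^2$$ subject to - $\sum_{i=1}^k x_i\ge s_k+kd$ for $1\le k\le N$, - $x_i\ge 2d$ for $2\le i\le N$, - $x_{N+1}\ge d$, - $\sum_{i=1}^{N+1}x_i=T+Nd$. Then for every $2\le i\le N-1$ we have $x_i^*\ge x_{i+1}^*$. Moreover, for such $i$, $x_i^*>x_{i+1}^*$ only if $\sum_{j=1}^i x_j^*=s_i+id$.
   Context: The problem arises from age-of-information minimization for a single energy harvesting transmitter with energy arrival times $s_k$, fixed service time $d$, and session length $T$. Its objective is strictly convex, so the optimal solution is unique. *)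

theory Defs
  imports Complex_Main
begin

text \<open>Vectors x in R^(N+1) are represented as functions nat => real, using
  the indices 1..N+1 (values outside that range are irrelevant).\<close>

definition aoi_feasible :: "nat \<Rightarrow> real \<Rightarrow> real \<Rightarrow> (nat \<Rightarrow> real) \<Rightarrow> (nat \<Rightarrow> real) \<Rightarrow> bool" where
  "aoi_feasible N d T s x \<longleftrightarrow>
     (\<forall>k\<in>{1..N}. (\<Sum>i=1..k. x i) \<ge> s k + real k * d) \<and>
     (\<forall>i\<in>{2..N}. x i \<ge> 2 * d) \<and>
     x (N + 1) \<ge> d \<and>
     (\<Sum>i=1..N+1. x i) = T + real N * d"

definition aoi_objective :: "nat \<Rightarrow> (nat \<Rightarrow> real) \<Rightarrow> real" where
  "aoi_objective N x = (\<Sum>i=1..N+1. (x i)^2)"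

definition aoi_optimal :: "nat \<Rightarrow> real \<Rightarrow> real \<Rightarrow> (nat \<Rightarrow> real) \<Rightarrow> (nat \<Rightarrow> real) \<Rightarrow> bool" where
  "aoi_optimal N d T s x \<longleftrightarrow> aoi_feasible N d T s x \<and>
     (\<forall>y. aoi_feasible N d T s y \<longrightarrow> aoi_objective N x \<le> aoi_objective N y)"

end

theory Submission
  imports Defs
begin

lemma sum_two_supp:
  fixes g :: "nat \<Rightarrow> real"
  assumes "finite A" "a \<in> A" "b \<in> A" "a \<noteq> b" "\<And>j. j \<in> A \<Longrightarrow> j \<noteq> a \<Longrightarrow> j \<noteq> b \<Longrightarrow> g j = 0"
  shows "sum g A = g a + g b"
proof -
  have "sum g A = sum g {a,b}"
    by (rule sum.mono_neutral_right) (use assms in auto)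
  thus ?thesis using assms by simp
qed

lemma sum_one_supp:
  fixes g :: "nat \<Rightarrow> real"
  assumes "finite A" "\<And>j. j \<in> A \<Longrightarrow> j \<noteq> a \<Longrightarrow> g j = 0"
  shows "sum g A = (if a \<in> A then g a else 0)"
proof (cases "a \<in> A")
  case True
  have "sum g A = sum g {a}"
    by (rule sum.mono_neutral_right) (use assms True in auto)
  thus ?thesis using True by simp
next
  case False
  have "sum g A = 0" by (rule sum.neutral) (use False assms in blast)
  thus ?thesis using False by simp
qed

definition shft :: "(nat \<Rightarrow> real) \<Rightarrow> nat \<Rightarrow> real \<Rightarrow> nat \<Rightarrow> real" where
  "shft x i e = x(i := x i + e, Suc i := x (Suc i) - e)"

lemma shft_prefix:
  assumes "1 \<le> i"
  shows "(\<Sum>j=1..k. shft x i e j) = (\<Sum>j=1..k. x j) + (if k = i then e else 0)"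
proof -
  have "(\<Sum>j=1..k. shft x i e j) - (\<Sum>j=1..k. x j) = (\<Sum>j=1..k. shft x i e j - x j)"
    by (simp add: sum_subtractf)
  also have "\<dots> = (if k = i then e else 0)"
  proof (cases "Suc i \<le> k")
    case True
    have "(\<Sum>j=1..k. shft x i e j - x j) = (shft x i e i - x i) + (shft x i e (Suc i) - x (Suc i))"
      by (rule sum_two_supp) (use assms True in \<open>auto simp: shft_def\<close>)
    thus ?thesis using True by (simp add: shft_def)
  next
    case False
    have "(\<Sum>j=1..k. shft x i e j - x j) = (if i \<in> {1..k} then shft x i e i - x i else 0)"
      by (rule sum_one_supp) (use assms False in \<open>auto simp: shft_def\<close>)
    thus ?thesis using False assms by (auto simp: shft_def)
  qed
  finally show ?thesis by simp
qed

lemma shft_obj: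
  assumes "1 \<le> i" "Suc i \<le> N + 1"
  shows "aoi_objective N (shft x i e) = aoi_objective N x
     + ((x i + e)^2 - (x i)^2) + ((x (Suc i) - e)^2 - (x (Suc i))^2)"
proof -
  have "aoi_objective N (shft x i e) - aoi_objective N x = (\<Sum>j=1..N+1. (shft x i e j)^2 - (x j)^2)"
    by (simp add: aoi_objective_def sum_subtractf)
  also have "\<dots> = ((shft x i e i)^2 - (x i)^2) + ((shft x i e (Suc i))^2 - (x (Suc i))^2)"
    by (rule sum_two_supp) (use assms in \<open>auto simp: shft_def\<close>)
  also have "\<dots> = ((x i + e)^2 - (x i)^2) + ((x (Suc i) - e)^2 - (x (Suc i))^2)"
    by (simp add: shft_def)
  finally show ?thesis by simp
qed

lemma shft_feasible:
  assumes F: "aoi_feasible N d T s x" and i: "2 \<le> i" "Suc i \<le> N"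
    and a: "x i + e \<ge> 2 * d" and b: "x (Suc i) - e \<ge> 2 * d"
    and c: "(\<Sum>j=1..i. x j) + e \<ge> s i + real i * d"
  shows "aoi_feasible N d T s (shft x i e)"
proof -
  have i1: "1 \<le> i" using i by simp
  have "\<forall>k\<in>{1..N}. (\<Sum>j=1..k. shft x i e j) \<ge> s k + real k * d"
  proof
    fix k assume k: "k \<in> {1..N}"
    have "(\<Sum>j=1..k. x j) \<ge> s k + real k * d" using F k unfolding aoi_feasible_def by blast
    thus "(\<Sum>j=1..k. shft x i e j) \<ge> s k + real k * d"
      using c shft_prefix[OF i1, where k=k and x=x and e=e] by (cases "k = i") simp_all
  qed
  moreover have "\<forall>j\<in>{2..N}. shft x i e j \<ge> 2 * d"
    using F a b unfolding aoi_feasible_def by (auto simp: shft_def)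
  moreover have "shft x i e (N+1) \<ge> d"
    using F i unfolding aoi_feasible_def by (auto simp: shft_def)
  moreover have "(\<Sum>j=1..N+1. shft x i e j) = T + real N * d"
    using F i shft_prefix[OF i1, where k="N+1" and x=x and e=e] unfolding aoi_feasible_def by simp
  ultimately show ?thesis unfolding aoi_feasible_def by blast
qed

theorem lemma1:
  fixes N :: nat and d T :: real and s x :: "nat \<Rightarrow> real"
  assumes "N \<ge> 1" and "d > 0" and "T > 0"
    and "0 \<le> s 1" and "\<And>k. 1 \<le> k \<Longrightarrow> k < N \<Longrightarrow> s k \<le> s (k + 1)"
    and "aoi_optimal N d T s x"
  shows "\<forall>i\<in>{2..N-1}. x i \<ge> x (i + 1) \<and>
           (x i > x (i + 1) \<longrightarrow> (\<Sum>j=1..i. x j) = s i + real i * d)"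
proof
  fix i assume iI: "i \<in> {2..N-1}"
  hence i: "2 \<le> i" "Suc i \<le> N" "1 \<le> i" "Suc i \<le> N + 1" by auto
  have F: "aoi_feasible N d T s x" and opt: "\<And>y. aoi_feasible N d T s y \<Longrightarrow> aoi_objective N x \<le> aoi_objective N y"
    using assms(6) unfolding aoi_optimal_def by auto
  have xi: "x i \<ge> 2 * d" "x (Suc i) \<ge> 2 * d" using F i unfolding aoi_feasible_def by auto
  have P: "(\<Sum>j=1..i. x j) \<ge> s i + real i * d" using F i unfolding aoi_feasible_def by auto
  have ge: "x i \<ge> x (Suc i)"
  proof (rule ccontr)
    assume "\<not> ?thesis"
    define e where "e = (x (Suc i) - x i) / 2"
    have e: "e > 0" using \<open>\<not> _\<close> by (simp add: e_def)
    have h1: "x (Suc i) - e \<ge> 2 * d" "x i + e \<ge> 2 * d" using xi \<open>\<not> _\<close> by (simp_all add: e_def field_simps)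
    have "x i + e \<ge> 2 * d" using h1 xi e P by linarith
    moreover have "x (Suc i) - e \<ge> 2 * d" using h1 xi e P by linarith
    moreover have "(\<Sum>j=1..i. x j) + e \<ge> s i + real i * d" using xi e P by linarith
    ultimately
    have "aoi_feasible N d T s (shft x i e)"
      by (intro shft_feasible[OF F i(1,2)])
    from opt[OF this] have "aoi_objective N x \<le> aoi_objective N (shft x i e)" .
    also have "\<dots> = aoi_objective N x + ((x i + e)^2 - (x i)^2) + ((x (Suc i) - e)^2 - (x (Suc i))^2)"
      by (rule shft_obj[OF i(3,4)])
    finally have "0 \<le> ((x i + e)^2 - (x i)^2) + ((x (Suc i) - e)^2 - (x (Suc i))^2)" by simp
    moreover have "((x i + e)^2 - (x i)^2) + ((x (Suc i) - e)^2 - (x (Suc i))^2) = - 2 * e^2"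
      by (simp add: e_def power2_eq_square algebra_simps)
    ultimately show False using e by (smt (verit) zero_less_power)
  qed
  have eq: "(\<Sum>j=1..i. x j) = s i + real i * d" if gt: "x i > x (Suc i)"
  proof (rule ccontr)
    assume ne: "\<not> ?thesis"
    define D where "D = x i - x (Suc i)"
    define e where "e = min (D / 2) ((\<Sum>j=1..i. x j) - (s i + real i * d))"
    have e1: "e > 0" using ne P gt by (auto simp: e_def D_def)
    have e2: "e \<le> D / 2" unfolding e_def by (rule min.cobounded1)
    have e3: "e \<le> (\<Sum>j=1..i. x j) - (s i + real i * d)" unfolding e_def by (rule min.cobounded2)
    note e = e1 e2 e3
    have hD: "x i - D/2 \<ge> 2 * d" using xi by (simp add: D_def field_simps)
    have "x i + -e \<ge> 2 * d" using hD xi e by linarith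
    moreover have "x (Suc i) - -e \<ge> 2 * d" using xi e by linarith
    moreover have "(\<Sum>j=1..i. x j) + -e \<ge> s i + real i * d" using e by linarith
    ultimately have "aoi_feasible N d T s (shft x i (-e))"
      by (intro shft_feasible[OF F i(1,2)])
    from opt[OF this] have "aoi_objective N x \<le> aoi_objective N (shft x i (-e))" .
    also have "\<dots> = aoi_objective N x + ((x i + -e)^2 - (x i)^2) + ((x (Suc i) - -e)^2 - (x (Suc i))^2)"
      by (rule shft_obj[OF i(3,4)])
    finally have "0 \<le> ((x i + -e)^2 - (x i)^2) + ((x (Suc i) - -e)^2 - (x (Suc i))^2)" by simp
    moreover have "((x i + -e)^2 - (x i)^2) + ((x (Suc i) - -e)^2 - (x (Suc i))^2) = 2 * e * (e - D)"
      by (simp add: D_def power2_eq_square algebra_simps)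
    moreover have "2 * e * (e - D) < 0" using e by (intro mult_pos_neg) auto
    ultimately show False by linarith
  qed
  show "x i \<ge> x (i + 1) \<and> (x i > x (i + 1) \<longrightarrow> (\<Sum>j=1..i. x j) = s i + real i * d)"
    using ge eq by simp
qed

end
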